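(* For $n\ge 1$, $$(\mathfrak C_0+\mathfrak C_0+\mathfrak C_0)^n=(2n-1)(n-1)\mathfrak C_{2n}+n(2n-1)(2n-3)^2\mathfrak C_{2n-2}.$$
   Context: The numbers $\mathfrak C_{2n}$ (Cauchy numbers with level $2$) are defined by $\frac{t}{{\rm arcsinh}\,t}=\sum_{n=0}^\infty\mathfrak C_{2n}\frac{t^{2n}}{(2n)!}$. Convolution notation: $(\mathfrak C_{2j_1}+\cdots+\mathfrak C_{2j_k})^n:=\sum_{i_1+\cdots+i_k=n,\ i_1,\dots,i_k\ge0}\frac{(2n)!}{(2i_1)!\cdots(2i_k)!}\mathfrak C_{2i_1+2j_1}\cdots\mathfrak C_{2i_k+2j_k}$. *)

theory Defs
  imports "HOL-Analysis.Analysis"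
begin

definition t_over_arsinh :: "real \<Rightarrow> real" where
  "t_over_arsinh t = (if t = 0 then 1 else t / arsinh t)"

text \<open>Cauchy numbers with level 2: frakC k is the k-th Taylor coefficient times k!
  of t / arcsinh t at 0, i.e. the k-th derivative at 0. The paper's C_{2n} is frakC (2*n).\<close>
definition frakC :: "nat \<Rightarrow> real" where
  "frakC k = (deriv ^^ k) t_over_arsinh 0"

text \<open>Convolution (C_{2j1} + C_{2j2} + C_{2j3})^n.\<close>
definition conv3 :: "nat \<Rightarrow> nat \<Rightarrow> nat \<Rightarrow> nat \<Rightarrow> real" where
  "conv3 j1 j2 j3 n =
     (\<Sum>(i1, i2, i3) \<in> {(i1, i2, i3). i1 + i2 + i3 = n}.
        fact (2*n) / (fact (2*i1) * fact (2*i2) * fact (2*i3))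
        * frakC (2*i1 + 2*j1) * frakC (2*i2 + 2*j2) * frakC (2*i3 + 2*j3))"

end

theory Submission imports Defs "HOL-Computational_Algebra.Formal_Power_Series" begin

fun bseq :: "nat \<Rightarrow> real" where
  "bseq 0 = 1"
| "bseq (Suc 0) = 0"
| "bseq (Suc (Suc m)) = - (real m + 1) / (real m + 2) * bseq m"

lemma bseq_bound: "\<bar>bseq k\<bar> \<le> 1"
proof (induction k rule: bseq.induct)
  case (3 m)
  have "\<bar>bseq (Suc (Suc m))\<bar> = (real m + 1) / (real m + 2) * \<bar>bseq m\<bar>"
    by (simp add: abs_mult)
  also have "\<dots> \<le> 1 * 1"
    by (intro mult_mono) (use 3 in auto)
  finally show ?case by simp
qed auto

lemma bseq_odd: "bseq (2*k+1) = 0"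
  by (induction k) (auto simp: numeral_2_eq_2)

lemma bseq_rec: "(real i + 2) * bseq (i+2) + (real i + 1) * bseq i = 0"
  by (simp add: numeral_2_eq_2 field_simps)

definition "Bf = Abs_fps bseq"
definition "A1f = Abs_fps (\<lambda>k. bseq k / (real k + 1))"
definition "Af = fps_X * A1f"

lemma conv_radius_bounded:
  fixes a :: "nat \<Rightarrow> real"
  assumes "\<And>n. \<bar>a n\<bar> \<le> 1"
  shows "conv_radius a \<ge> 1"
proof (rule conv_radius_geI_ex')
  fix r :: real assume r: "0 < r" "ereal r < 1"
  hence r1: "r < 1" by simp
  show "summable (\<lambda>n. a n * of_real r ^ n)"
  proof (rule summable_comparison_test'[where g="\<lambda>n. r ^ n" and N=0])
    show "norm (a n * of_real r ^ n) \<le> r ^ n" for n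
      using assms r by (auto simp: abs_mult intro!: mult_left_le_one_le)
    show "summable (\<lambda>n. r ^ n)" using r r1 by (intro summable_geometric) auto
  qed
qed

lemma Bf_rad: "fps_conv_radius Bf \<ge> 1"
  unfolding fps_conv_radius_def Bf_def by (intro conv_radius_bounded) (simp add: bseq_bound)

lemma A1f_rad: "fps_conv_radius A1f \<ge> 1"
  unfolding fps_conv_radius_def A1f_def
proof (intro conv_radius_bounded)
  fix n
  have "\<bar>bseq n / (real n + 1)\<bar> = \<bar>bseq n\<bar> / (real n + 1)" by (simp add: abs_div)
  also have "\<dots> \<le> \<bar>bseq n\<bar>" by (simp add: divide_le_eq mult_le_cancel_left1)
  finally show "\<bar>fps_nth (Abs_fps (\<lambda>k. bseq k / (real k + 1))) n\<bar> \<le> 1" using bseq_bound[of n] by simp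
qed

lemma Af_rad: "fps_conv_radius Af \<ge> 1"
  unfolding Af_def using fps_conv_radius_mult[of fps_X A1f] A1f_rad by auto

lemma Af_deriv: "fps_deriv Af = Bf"
proof (rule fps_ext)
  fix n
  have h: "real (Suc n) * bseq n / (real n + 1) = bseq n"
    by (simp add: field_simps)
  then show "fps_nth (fps_deriv Af) n = fps_nth Bf n"
    unfolding Af_def A1f_def Bf_def fps_deriv_nth fps_X_mult_nth by simp
qed

lemma Bf_ode: "(1 + fps_X^2) * fps_deriv Bf = - fps_X * Bf"
proof (rule fps_ext)
  fix j
  show "fps_nth ((1 + fps_X^2) * fps_deriv Bf) j = fps_nth (- fps_X * Bf) j"
  proof (cases j)
    case 0 then show ?thesis by (simp add: Bf_def distrib_right fps_X_power_mult_nth)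
  next
    case (Suc i)
    have e1: "fps_nth (fps_deriv Bf) (Suc i) = (real i + 2) * bseq (i+2)"
      by (simp add: Bf_def numeral_2_eq_2 add.commute)
    have e2: "fps_nth (fps_X^2 * fps_deriv Bf) (Suc i) = (if i = 0 then 0 else real i * bseq i)"
      by (cases i) (auto simp: fps_X_power_mult_nth Bf_def)
    have "fps_nth ((1 + fps_X^2) * fps_deriv Bf) j = (real i + 2) * bseq (i+2) + (if i = 0 then 0 else real i * bseq i)"
      using Suc e1 e2 by (simp add: distrib_right del: fps_deriv_nth)
    also have "\<dots> = - bseq i" using bseq_rec[of i] by (auto simp: algebra_simps)
    also have "\<dots> = fps_nth (- fps_X * Bf) j" using Suc by (simp add: Bf_def)
    finally show ?thesis .
  qed
qed

lemma Bf_sq: "(1 + fps_X^2) * Bf^2 = 1"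
proof -
  define D where "D = (1 + fps_X^2) * Bf^2"
  have "fps_deriv D = 2 * fps_X * Bf^2 + 2 * Bf * ((1 + fps_X^2) * fps_deriv Bf)"
    unfolding D_def by (simp add: fps_deriv_power power2_eq_square algebra_simps numeral_2_eq_2)
  also have "\<dots> = 0" using Bf_ode by (simp add: power2_eq_square)
  finally have "D = fps_const (fps_nth D 0)" by simp
  moreover have "fps_nth D 0 = 1" by (simp add: D_def Bf_def power2_eq_square fps_mult_nth distrib_right)
  ultimately show ?thesis unfolding D_def by simp
qed


lemma in_rad: "\<bar>x::real\<bar> < 1 \<Longrightarrow> fps_conv_radius F \<ge> 1 \<Longrightarrow> ereal (norm x) < fps_conv_radius F"
proof -
  assume a: "\<bar>x::real\<bar> < 1" "fps_conv_radius F \<ge> 1"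
  have "ereal (norm x) < 1" using a(1) by simp
  then show ?thesis using a(2) by (rule less_le_trans)
qed

lemma eval_Bf_sq:
  assumes "\<bar>x\<bar> < 1"
  shows "(1 + x^2) * (eval_fps Bf x)^2 = 1"
proof -
  have rB: "ereal (norm x) < fps_conv_radius Bf" using in_rad[OF assms Bf_rad] .
  have "eval_fps ((1 + fps_X^2) * Bf^2) x = eval_fps (1 + fps_X^2) x * eval_fps (Bf^2) x"
  proof (rule eval_fps_mult)
    have "fps_conv_radius (1 + fps_X^2 :: real fps) = \<infinity>"
      using fps_conv_radius_add[of 1 "fps_X^2 :: real fps"] by simp
    then show "ereal (norm x) < fps_conv_radius (1 + fps_X^2 :: real fps)" by simp
    show "ereal (norm x) < fps_conv_radius (Bf^2)"
      using rB fps_conv_radius_power[of Bf 2] by (rule less_le_trans)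
  qed
  also have "eval_fps (1 + fps_X^2) x = 1 + x^2"
    by (subst eval_fps_add) auto
  also have "eval_fps (Bf^2) x = (eval_fps Bf x)^2"
    by (rule eval_fps_power) (use rB in auto)
  finally show ?thesis using Bf_sq by simp
qed

lemma cont_Bf: "continuous_on {a..b} (eval_fps Bf)" if "-1 < a" "b < 1"
proof (rule continuous_on_subset[OF continuous_on_eval_fps])
  show "{a..b} \<subseteq> eball 0 (fps_conv_radius Bf)"
  proof
    fix y assume "y \<in> {a..b}"
    hence "\<bar>y\<bar> < 1" using that by auto
    from in_rad[OF this Bf_rad] show "y \<in> eball 0 (fps_conv_radius Bf)" by simp
  qed
qed

lemma eval_Bf_pos:
  assumes "\<bar>x\<bar> < 1"
  shows "eval_fps Bf x > 0"
proof (rule ccontr)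
  assume neg: "\<not> eval_fps Bf x > 0"
  have nz: "eval_fps Bf y \<noteq> 0" if "\<bar>y\<bar> < 1" for y
    using eval_Bf_sq[OF that] by auto
  have b0: "eval_fps Bf 0 = 1" by (simp add: eval_fps_at_0 Bf_def)
  show False
  proof (cases "x \<ge> 0")
    case True
    from IVT2'[of "eval_fps Bf" x 0 0] obtain y where "0 \<le> y" "y \<le> x" "eval_fps Bf y = 0"
      using neg True b0 cont_Bf[of 0 x] assms by auto
    with nz[of y] assms show False by auto
  next
    case False
    from IVT'[of "eval_fps Bf" x 0 0] obtain y where "x \<le> y" "y \<le> 0" "eval_fps Bf y = 0"
      using neg False b0 cont_Bf[of x 0] assms by auto
    with nz[of y] assms show False by auto
  qed
qed

lemma eval_Bf:
  assumes "\<bar>x\<bar> < 1"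
  shows "eval_fps Bf x = 1 / sqrt (x^2 + 1)"
proof -
  define b where "b = eval_fps Bf x"
  have "b > 0" using eval_Bf_pos[OF assms] by (simp add: b_def)
  have sq: "(1 + x^2) * b^2 = 1" using eval_Bf_sq[OF assms] by (simp add: b_def)
  have "x^2 + 1 > 0" using zero_le_power2[of x] by linarith
  hence s: "sqrt (x^2+1) > 0" by simp
  have "(sqrt (x^2+1) * b)^2 = 1" using sq by (simp add: power_mult_distrib add.commute)
  hence "sqrt (x^2+1) * b = 1" using s \<open>b > 0\<close>
  proof -
    have "sqrt (x^2+1) * b > 0" using s \<open>b > 0\<close> by simp
    with \<open>(sqrt (x^2+1) * b)^2 = 1\<close> show ?thesis unfolding power2_eq_1_iff by linarith
  qed
  thus ?thesis using s unfolding b_def by (simp add: field_simps)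
qed

lemma eval_Af:
  assumes "\<bar>x\<bar> < 1"
  shows "eval_fps Af x = arsinh x"
proof -
  have "\<exists>c. \<forall>y\<in>ball 0 1. eval_fps Af y - arsinh y = (c::real)"
  proof (rule has_field_derivative_zero_constant)
    fix y :: real assume "y \<in> ball 0 1"
    hence y: "\<bar>y\<bar> < 1" by auto
    have "((\<lambda>y. eval_fps Af y - arsinh y) has_field_derivative
           (eval_fps (fps_deriv Af) y - 1 / sqrt (y^2+1))) (at y within ball 0 1)"
      by (intro derivative_intros has_field_derivative_eval_fps in_rad[OF y Af_rad])
    thus "((\<lambda>y. eval_fps Af y - arsinh y) has_field_derivative 0) (at y within ball 0 1)"
      using eval_Bf[OF y] by (simp add: Af_deriv)
  qed auto
  then obtain c where c: "\<And>y. y \<in> ball 0 1 \<Longrightarrow> eval_fps Af y - arsinh y = c" by blast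
  have "c = 0" using c[of 0] by (simp add: eval_fps_at_0 Af_def)
  with c[of x] assms show ?thesis by auto
qed

lemma arsinh_exp: "arsinh has_fps_expansion Af"
  unfolding has_fps_expansion_def
proof
  show "fps_conv_radius Af > 0" using Af_rad by (rule less_le_trans[rotated]) simp
  have "eventually (\<lambda>z. z \<in> ball (0::real) 1) (nhds 0)" by (intro eventually_nhds_in_open) auto
  thus "eventually (\<lambda>z. eval_fps Af z = arsinh z) (nhds 0)"
    by eventually_elim (auto intro: eval_Af)
qed

lemma A1f_shift: "fps_shift 1 Af = A1f"
  by (rule fps_ext) (simp add: Af_def)

lemma A1f_0: "fps_nth A1f 0 = 1" by (simp add: A1f_def)

lemma tA_exp: "t_over_arsinh has_fps_expansion inverse A1f"
proof -
  have "(\<lambda>x. if x = 0 then 1 else arsinh x / x ^ 1) has_fps_expansion fps_shift 1 Af"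
    using A1f_0 by (intro has_fps_expansion_shift[OF arsinh_exp]) (auto simp: Af_def intro!: subdegree_geI)
  hence "(\<lambda>x. if x = 0 then 1 else arsinh x / x) has_fps_expansion A1f"
    unfolding A1f_shift power_one_right .
  hence "(\<lambda>x. inverse (if x = 0 then 1 else arsinh x / x)) has_fps_expansion inverse A1f"
    by (rule has_fps_expansion_inverse) (simp add: A1f_0)
  also have "(\<lambda>x. inverse (if x = 0 then 1 else arsinh x / x)) = t_over_arsinh"
    by (auto simp: t_over_arsinh_def fun_eq_iff)
  finally show ?thesis .
qed


lemma fps_deriv_funpow_nth:
  "fps_nth ((fps_deriv ^^ k) F) j = fact (j + k) / fact j * fps_nth (F :: real fps) (j + k)"
proof (induction k arbitrary: j)
  case 0 then show ?case by simp
next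
  case (Suc k)
  have "fps_nth ((fps_deriv ^^ Suc k) F) j = real (j + 1) * fps_nth ((fps_deriv ^^ k) F) (j + 1)"
    by simp
  also have "\<dots> = real (j + 1) * (fact (j + 1 + k) / fact (j + 1) * fps_nth F (j + 1 + k))"
    by (simp only: Suc)
  also have "\<dots> = fact (j + Suc k) / fact j * fps_nth F (j + Suc k)"
    by (simp add: field_simps del: of_nat_Suc)
  finally show ?case .
qed

lemma has_fps_expansion_at0:
  assumes "(g :: real \<Rightarrow> real) has_fps_expansion G" shows "g 0 = fps_nth G 0"
proof -
  have "eventually (\<lambda>z. eval_fps G z = g z) (nhds 0)"
    using assms unfolding has_fps_expansion_def by blast
  hence "eval_fps G 0 = g 0" by (rule eventually_nhds_x_imp_x)
  thus ?thesis by (simp add: eval_fps_at_0)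
qed

lemma deriv_coeff_real:
  fixes f :: "real \<Rightarrow> real"
  assumes "f has_fps_expansion F"
  shows "(deriv ^^ k) f 0 = fact k * fps_nth F k"
proof -
  have "(deriv ^^ k) f has_fps_expansion (fps_deriv ^^ k) F"
  proof (induction k)
    case 0 then show ?case using assms by simp
  next
    case (Suc k)
    then show ?case by (simp add: has_fps_expansion_deriv)
  qed
  from has_fps_expansion_at0[OF this] show ?thesis
    by (simp add: fps_deriv_funpow_nth)
qed

definition "Ff = inverse A1f"

lemma frakC_coeff: "frakC k = fact k * fps_nth Ff k"
  unfolding frakC_def Ff_def by (rule deriv_coeff_real[OF tA_exp])

lemma Ff_ode:
  "2 * Ff^3 = (1 + fps_X^2) * fps_X^2 * fps_deriv (fps_deriv Ff)
      - (2 + fps_X^2) * fps_X * fps_deriv Ff + (2 + fps_X^2) * Ff"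
proof -
  define a where "a = A1f"
  define p where "p = fps_deriv a"
  define q where "q = fps_deriv p"
  define f1 where "f1 = fps_deriv Ff"
  define f2 where "f2 = fps_deriv f1"
  define x :: "real fps" where "x = fps_X"
  have h1: "Ff * a = 1" unfolding Ff_def a_def by (rule inverse_mult_eq_1) (simp add: A1f_0)
  have h2: "f1 * a + Ff * p = 0"
    using arg_cong[OF h1, of fps_deriv] unfolding f1_def p_def by (simp add: fps_deriv_mult algebra_simps)
  have h3: "f2 * a + 2 * f1 * p + Ff * q = 0"
    using arg_cong[OF h2, of fps_deriv] unfolding f1_def p_def f2_def q_def
    by (simp add: fps_deriv_mult algebra_simps)
  have hB: "Bf = a + x * p" unfolding Af_deriv[symmetric] Af_def a_def p_def x_def
    by (simp add: fps_deriv_mult)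
  have hB': "fps_deriv Bf = 2 * p + x * q" unfolding hB p_def q_def x_def
    by (simp add: fps_deriv_mult)
  have h4: "(1 + x^2) * (2*p + x*q) = - x * (a + x * p)"
    using Bf_ode unfolding hB' unfolding hB x_def .
  have h5: "(1 + x^2) * (a + x*p)^2 = 1"
    using Bf_sq unfolding hB x_def .
  have "2 * Ff^3 = (1 + x^2) * x^2 * f2 - (2 + x^2) * x * f1 + (2 + x^2) * Ff"
    using h1 h2 h3 h4 h5 by algebra
  then show ?thesis unfolding x_def f1_def f2_def .
qed


definition evfps :: "real fps \<Rightarrow> bool" where
  "evfps P \<longleftrightarrow> (\<forall>j. odd j \<longrightarrow> fps_nth P j = 0)"

lemma bseq_odd': "bseq (Suc (2*k)) = 0" using bseq_odd[of k] by simp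

lemma ev_A1f: "evfps A1f"
  unfolding evfps_def A1f_def by (auto elim!: oddE simp: bseq_odd')

lemma ev_inverse:
  assumes P: "evfps P" and PQ: "P * Q = 1"
  shows "evfps Q"
  unfolding evfps_def
proof (intro allI)
  fix j show "odd j \<longrightarrow> fps_nth Q j = 0"
  proof (induction j rule: less_induct)
    case (less j)
    show ?case
    proof
      assume oj: "odd j"
      hence j0: "j \<noteq> 0" by (cases j) auto
      have P0: "fps_nth P 0 \<noteq> 0"
        using arg_cong[OF PQ, of "\<lambda>F. fps_nth F 0"] by (auto simp: fps_mult_nth)
      have "0 = fps_nth (P * Q) j" using PQ j0 by simp
      also have "\<dots> = (\<Sum>i=0..j. fps_nth P i * fps_nth Q (j - i))" by (rule fps_mult_nth)
      also have "\<dots> = fps_nth P 0 * fps_nth Q j + (\<Sum>i=Suc 0..j. fps_nth P i * fps_nth Q (j - i))"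
        by (subst sum.atLeast_Suc_atMost) auto
      also have "(\<Sum>i=Suc 0..j. fps_nth P i * fps_nth Q (j - i)) = 0"
      proof (rule sum.neutral, intro ballI)
        fix i assume i: "i \<in> {Suc 0..j}"
        show "fps_nth P i * fps_nth Q (j - i) = 0"
        proof (cases "odd i")
          case True then show ?thesis using P by (simp add: evfps_def)
        next
          case False
          hence "odd (j - i)" "j - i < j" using i oj by auto
          then show ?thesis using less.IH by simp
        qed
      qed
      finally show "fps_nth Q j = 0" using P0 by simp
    qed
  qed
qed

lemma ev_mult:
  assumes "evfps P" "evfps Q" shows "evfps (P * Q)"
  unfolding evfps_def
proof (intro allI impI)
  fix j :: nat assume oj: "odd j"
  show "fps_nth (P * Q) j = 0" unfolding fps_mult_nth
  proof (rule sum.neutral, intro ballI)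
    fix i assume i: "i \<in> {0..j}"
    show "fps_nth P i * fps_nth Q (j - i) = 0"
    proof (cases "odd i")
      case True then show ?thesis using assms by (simp add: evfps_def)
    next
      case False
      hence "odd (j - i)" using i oj by auto
      then show ?thesis using assms by (simp add: evfps_def)
    qed
  qed
qed

lemma ev_mult_nth:
  assumes "evfps P" "evfps Q"
  shows "fps_nth (P * Q) (2*n) = (\<Sum>i=0..n. fps_nth P (2*i) * fps_nth Q (2*(n-i)))"
proof -
  define g where "g i = fps_nth P i * fps_nth Q (2*n - i)" for i
  have "fps_nth (P * Q) (2*n) = sum g {0..2*n}" unfolding fps_mult_nth g_def ..
  also have "\<dots> = sum g ((\<lambda>i. 2*i) ` {0..n})"
  proof (rule sum.mono_neutral_right)
    show "(\<lambda>i. 2*i) ` {0..n} \<subseteq> {0..2*n}" by auto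
    show "\<forall>i\<in>{0..2*n} - (\<lambda>i. 2*i) ` {0..n}. g i = 0"
    proof
      fix i assume i: "i \<in> {0..2*n} - (\<lambda>i. 2*i) ` {0..n}"
      have "odd i"
      proof (rule ccontr)
        assume "\<not> odd i"
        then obtain l where "i = 2*l" by (auto elim: evenE)
        with i show False by auto
      qed
      then show "g i = 0" using assms by (simp add: evfps_def g_def)
    qed
  qed auto
  also have "\<dots> = (\<Sum>i=0..n. g (2*i))" by (subst sum.reindex) (auto simp: inj_on_def)
  also have "\<dots> = (\<Sum>i=0..n. fps_nth P (2*i) * fps_nth Q (2*(n-i)))"
    by (intro sum.cong) (auto simp: g_def right_diff_distrib')
  finally show ?thesis .
qed

lemma ev_Ff: "evfps Ff"
  unfolding Ff_def by (rule ev_inverse[OF ev_A1f inverse_mult_eq_1'[of A1f]]) (simp add: A1f_0)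

abbreviation "cc j \<equiv> fps_nth Ff j"

lemma cube_nth:
  "fps_nth (Ff^3) (2*n) = (\<Sum>i=0..n. \<Sum>j=0..i. cc (2*j) * cc (2*(i-j)) * cc (2*(n-i)))"
proof -
  have "Ff^3 = (Ff * Ff) * Ff" by (simp add: power3_eq_cube)
  hence "fps_nth (Ff^3) (2*n) = (\<Sum>i=0..n. fps_nth (Ff*Ff) (2*i) * cc (2*(n-i)))"
    using ev_mult_nth[OF ev_mult[OF ev_Ff ev_Ff] ev_Ff] by simp
  also have "\<dots> = (\<Sum>i=0..n. (\<Sum>j=0..i. cc (2*j) * cc (2*(i-j))) * cc (2*(n-i)))"
    using ev_mult_nth[OF ev_Ff ev_Ff] by simp
  also have "\<dots> = (\<Sum>i=0..n. \<Sum>j=0..i. cc (2*j) * cc (2*(i-j)) * cc (2*(n-i)))"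
    by (simp add: sum_distrib_right)
  finally show ?thesis .
qed

lemma conv3_eq: "conv3 0 0 0 n = fact (2*n) * fps_nth (Ff^3) (2*n)"
proof -
  define G where "G = (\<lambda>(i1::nat, i2::nat, i3::nat). cc (2*i1) * cc (2*i2) * cc (2*i3))"
  define T where "T = {(i1::nat, i2::nat, i3::nat). i1 + i2 + i3 = n}"
  have "conv3 0 0 0 n = (\<Sum>t\<in>T. fact (2*n) * G t)"
    unfolding conv3_def T_def
  proof (intro sum.cong refl)
    fix t :: "nat \<times> nat \<times> nat"
    obtain a b c where t: "t = (a, b, c)" by (cases t) auto
    have "fact (2*a) \<noteq> (0::real)" "fact (2*b) \<noteq> (0::real)" "fact (2*c) \<noteq> (0::real)" by auto
    then show "(case t of (i1, i2, i3) \<Rightarrow> fact (2 * n) / (fact (2 * i1) * fact (2 * i2) * fact (2 * i3)) *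
          frakC (2 * i1 + 2 * 0) * frakC (2 * i2 + 2 * 0) * frakC (2 * i3 + 2 * 0)) = fact (2*n) * G t"
      unfolding t G_def frakC_coeff by (simp add: field_simps)
  qed
  also have "\<dots> = fact (2*n) * sum G T" by (simp add: sum_distrib_left)
  also have "sum G T = (\<Sum>(i,j)\<in>(SIGMA i:{0..n}. {0..i}). G (j, i-j, n-i))"
    by (rule sum.reindex_bij_witness[where j="\<lambda>(a,b,c). (a+b, a)" and i="\<lambda>(i,j). (j, i-j, n-i)"])
       (auto simp: T_def)
  also have "\<dots> = (\<Sum>i=0..n. \<Sum>j=0..i. G (j, i-j, n-i))"
    by (rule sum.Sigma[symmetric]) auto
  also have "\<dots> = fps_nth (Ff^3) (2*n)"
    unfolding cube_nth G_def by (simp add: mult.commute mult.left_commute)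
  finally show ?thesis .
qed


lemma key_coeff:
  "2 * fps_nth (Ff^3) (2*k+2) = (2*real k + 1) * (2*real k) * cc (2*k+2) + (2*real k - 1)^2 * cc (2*k)"
proof -
  define f1 where "f1 = fps_deriv Ff"
  define f2 where "f2 = fps_deriv f1"
  have "2 * Ff^3 = fps_X^2 * f2 + fps_X^4 * f2 - 2 * (fps_X^1 * f1) - fps_X^3 * f1 + 2 * Ff + fps_X^2 * Ff"
    using Ff_ode unfolding f1_def[symmetric] f2_def[symmetric] by algebra
  hence "fps_nth (2 * Ff^3) (2*k+2) = fps_nth (fps_X^2 * f2 + fps_X^4 * f2 - 2 * (fps_X^1 * f1) - fps_X^3 * f1 + 2 * Ff + fps_X^2 * Ff) (2*k+2)"
    by simp
  also have "\<dots> = (2*real k + 1) * (2*real k) * cc (2*k+2) + (2*real k - 1)^2 * cc (2*k)"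
  proof (cases k)
    case 0
    have "fps_nth (fps_X^2 * f2 + fps_X^4 * f2 - 2 * (fps_X^1 * f1) - fps_X^3 * f1 + 2 * Ff + fps_X^2 * Ff) (2*k+2)
      = fps_nth f2 0 - 2 * fps_nth f1 1 + 2 * cc (2*k+2) + cc (2*k)"
      using 0 by (simp add: fps_X_power_mult_nth del: fps_deriv_nth power_one_right)
    also have "\<dots> = cc (2*k)" using 0 by (simp add: f1_def f2_def)
    finally show ?thesis using 0 by (simp add: numeral_2_eq_2)
  next
    case (Suc k')
    have e: "2*k+2 - 2 = 2*k" "2*k+2 - 4 = 2*k'" "2*k+2-1 = 2*k+1" "2*k+2-3 = 2*k'+1" using Suc by auto
    have "fps_nth (fps_X^2 * f2 + fps_X^4 * f2 - 2 * (fps_X^1 * f1) - fps_X^3 * f1 + 2 * Ff + fps_X^2 * Ff) (2*k+2)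
      = fps_nth f2 (2*k) + fps_nth f2 (2*k') - 2 * fps_nth f1 (2*k+1) - fps_nth f1 (2*k'+1) + 2 * cc (2*k+2) + cc (2*k)"
      using Suc by (simp add: fps_X_power_mult_nth e del: fps_deriv_nth power_one_right)
    also have "\<dots> = (2*real k + 1) * (2*real k) * cc (2*k+2) + (2*real k - 1)^2 * cc (2*k)"
      using Suc by (simp add: f1_def f2_def algebra_simps power2_eq_square numeral_2_eq_2)
    finally show ?thesis .
  qed
  finally show ?thesis by simp
qed

theorem theorem5:
  fixes n :: nat
  assumes "n \<ge> 1"
  shows "conv3 0 0 0 n =
    (2 * real n - 1) * (real n - 1) * frakC (2*n)
    + real n * (2 * real n - 1) * (2 * real n - 3)^2 * frakC (2*n - 2)"
proof -
  obtain k where n: "n = k + 1" using assms by (metis le_add_diff_inverse2)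
  have i1: "2*n = 2*k+2" "2*n - 2 = 2*k" using n by auto
  have fct: "(fact (2*k+2) :: real) = (2*real k + 2) * (2*real k + 1) * fact (2*k)"
    by (simp add: numeral_2_eq_2 algebra_simps)
  define T where "T = fps_nth (Ff^3) (2*k+2)"
  have kc: "2 * T = (2*real k + 1) * (2*real k) * cc (2*k+2) + (2*real k - 1)^2 * cc (2*k)"
    unfolding T_def by (rule key_coeff)
  have "conv3 0 0 0 n = fact (2*k+2) * T" unfolding conv3_eq T_def i1 ..
  also have "\<dots> = (2*real k + 2) * (2*real k + 1) * fact (2*k) * T" by (simp only: fct)
  also have "\<dots> = (2 * real n - 1) * (real n - 1) * ((2*real k + 2) * (2*real k + 1) * fact (2*k) * cc (2*k+2))
    + real n * (2 * real n - 1) * (2 * real n - 3)^2 * (fact (2*k) * cc (2*k))"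
    using kc unfolding n by (simp add: algebra_simps power2_eq_square) algebra
  also have "\<dots> = (2 * real n - 1) * (real n - 1) * frakC (2*n)
    + real n * (2 * real n - 1) * (2 * real n - 3)^2 * frakC (2*n - 2)"
  proof -
    have a: "frakC (2*n) = (2*real k + 2) * (2*real k + 1) * fact (2*k) * cc (2*k+2)"
      unfolding i1(1) frakC_coeff fct ..
    have b: "frakC (2*n - 2) = fact (2*k) * cc (2*k)"
      unfolding i1(2) frakC_coeff ..
    show ?thesis unfolding a b ..
  qed
  finally show ?thesis .
qed

end
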